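(* Let $\mathcal F$ be an admissible sheaf of local vector fields on a smooth manifold $M$, and let $\gamma:[a,b]\to M$ be a continuous path such that $t\mapsto\kappa^{\mathcal F}_{\gamma(t)}$ is constant on $[a,b]$. Then for every $\mathfrak g_*\in\mathfrak G^{\mathcal F}_{\gamma(a)}$ there exists a unique transport of $\mathcal F$-germs $t\mapsto\mathfrak g_t$ along $\gamma$ with $\mathfrak g_a=\mathfrak g_*$.
   Context: Let $M$ be a smooth manifold and $\mathfrak X(U)$ the smooth vector fields on an open set $U$. A sheaf of local vector fields $\mathcal F$ on $M$ assigns to every connected open set $U\subset M$ a linear subspace $\mathcal F(U)\subset\mathfrak X(U)$, stable under restriction to connected open subsets and satisfying gluing: if $K\in\mathfrak X(U)$ and $U=\bigcup_i U_i$ with $K|_{U_i}\in\mathcal F(U_i)$, then $K\in\mathcal F(U)$. $\mathcal F$ has the unique continuation property if whenever $U$ is connected open, $K\in\mathcal F(U)$ and $K$ vanishes on a nonempty open subset of $U$, then $K=0$. $\mathcal F$ has bounded rank if there is an integer $N$ with $\dim\mathcal F(U)\le N$ for all connected open $U$; it is admissible if it has the unique continuation property and bounded rank. For $p\in M$, $\mathfrak G^{\mathcal F}_p$ is the vector space of germs at $p$ of elements $K\in\mathcal F(U)$ ($U$ a connected open neighborhood of $p$), two such being identified if they agree on an open neighborhood of $p$; the germ of $K$ is $\mathrm{germ}_p(K)$, and $\kappa^{\mathcal F}_p:=\dim\mathfrak G^{\mathcal F}_p$. Given a curve $\gamma:[a,b]\to M$, a transport of $\mathcal F$-germs along $\gamma$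 is a map $t\mapsto\mathfrak g_t\in\mathfrak G^{\mathcal F}_{\gamma(t)}$ such that for every $t_*\in[a,b]$ there exist $\varepsilon>0$, an open neighborhood $W$ of $\gamma(t_* )$ and $K\in\mathcal F(W)$ with $\gamma(t)\in W$ and $\mathfrak g_t=\mathrm{germ}_{\gamma(t)}(K)$ for all $t\in(t_*-\varepsilon,t_*+\varepsilon)\cap[a,b]$. *)

theory Defs
  imports "HOL-Analysis.Analysis"
begin

fun iter_deriv :: "('e::euclidean_space \<Rightarrow> real) \<Rightarrow> 'e list \<Rightarrow> 'e \<Rightarrow> real" where
  "iter_deriv f [] = f"
| "iter_deriv f (v # vs) = (\<lambda>x. frechet_derivative (iter_deriv f vs) (at x) v)"

definition smooth_fun_on :: "'e::euclidean_space set \<Rightarrow> ('e \<Rightarrow> real) \<Rightarrow> bool" where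
  "smooth_fun_on S f \<longleftrightarrow> (\<forall>vs. set vs \<subseteq> Basis \<longrightarrow> iter_deriv f vs differentiable_on S)"

definition smooth_map_on :: "'e::euclidean_space set \<Rightarrow> ('e \<Rightarrow> 'f::euclidean_space) \<Rightarrow> bool" where
  "smooth_map_on S f \<longleftrightarrow> (\<forall>i\<in>Basis. smooth_fun_on S (\<lambda>x. f x \<bullet> i))"

type_synonym ('a, 'e) chart = "('a \<Rightarrow> 'e) \<times> 'a set"

definition is_chart :: "('a::topological_space, 'e::euclidean_space) chart \<Rightarrow> bool" where
  "is_chart c \<longleftrightarrow> (case c of (\<phi>, V) \<Rightarrow>
     open V \<and> open (\<phi> ` V) \<and> inj_on \<phi> V \<and> continuous_on V \<phi> \<and>
     continuous_on (\<phi> ` V) (inv_into V \<phi>))"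

text \<open>A smooth atlas on the whole space (the type \<open>'a\<close> is the manifold M, of dimension DIM('e)).\<close>
definition smooth_atlas :: "('a::topological_space, 'e::euclidean_space) chart set \<Rightarrow> bool" where
  "smooth_atlas A \<longleftrightarrow>
     (\<Union>(snd ` A) = UNIV) \<and> (\<forall>c\<in>A. is_chart c) \<and>
     (\<forall>c\<in>A. \<forall>d\<in>A. smooth_map_on (fst c ` (snd c \<inter> snd d)) (fst d \<circ> inv_into (snd c) (fst c)))"

definition smooth_manifold :: "('a::topological_space, 'e::euclidean_space) chart set \<Rightarrow> bool" where
  "smooth_manifold A \<longleftrightarrow> smooth_atlas A \<and>
     (\<forall>x y::'a. x \<noteq> y \<longrightarrow> (\<exists>U V. open U \<and> open V \<and> x \<in> U \<and> y \<in> V \<and> U \<inter> V = {})) \<and>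
     (\<exists>\<B>::'a set set. countable \<B> \<and> topological_basis \<B>)"

text \<open>A (possibly local) vector field is represented by its coordinate expressions:
  \<open>X p c\<close> is the coordinate vector of X at p in chart c.  It is normalised to 0
  outside its domain U and for charts not containing p.\<close>
type_synonym ('a, 'e) vfield = "'a \<Rightarrow> ('a, 'e) chart \<Rightarrow> 'e"

definition vector_field_on :: "('a::topological_space, 'e::euclidean_space) chart set \<Rightarrow> 'a set \<Rightarrow> ('a, 'e) vfield \<Rightarrow> bool" where
  "vector_field_on A U X \<longleftrightarrow>
     (\<forall>p c. (p \<notin> U \<or> c \<notin> A \<or> p \<notin> snd c) \<longrightarrow> X p c = 0) \<and>
     (\<forall>c\<in>A. smooth_map_on (fst c ` (U \<inter> snd c)) (\<lambda>y. X (inv_into (snd c) (fst c) y) c)) \<and>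
     (\<forall>c\<in>A. \<forall>d\<in>A. \<forall>p\<in>U \<inter> snd c \<inter> snd d.
        X p d = frechet_derivative (fst d \<circ> inv_into (snd c) (fst c)) (at (fst c p)) (X p c))"

definition vfields :: "('a::topological_space, 'e::euclidean_space) chart set \<Rightarrow> 'a set \<Rightarrow> ('a, 'e) vfield set" where
  "vfields A U = {X. vector_field_on A U X}"

definition vf_zero :: "('a, 'e::real_vector) vfield" where
  "vf_zero = (\<lambda>p c. 0)"

definition vf_restrict :: "'a set \<Rightarrow> ('a, 'e::real_vector) vfield \<Rightarrow> ('a, 'e) vfield" where
  "vf_restrict V X = (\<lambda>p c. if p \<in> V then X p c else 0)"

definition lin_subspace :: "('a, 'e::real_vector) vfield set \<Rightarrow> bool" where
  "lin_subspace S \<longleftrightarrow> vf_zero \<in> S \<and>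
     (\<forall>X\<in>S. \<forall>Y\<in>S. (\<lambda>p c. X p c + Y p c) \<in> S) \<and>
     (\<forall>r. \<forall>X\<in>S. (\<lambda>p c. r *\<^sub>R X p c) \<in> S)"

definition lin_indep :: "('a, 'e::real_vector) vfield set \<Rightarrow> bool" where
  "lin_indep B \<longleftrightarrow> (\<forall>B' c. finite B' \<and> B' \<subseteq> B \<and>
      (\<lambda>p d. \<Sum>K\<in>B'. c K *\<^sub>R K p d) = vf_zero \<longrightarrow> (\<forall>K\<in>B'. c K = 0))"

definition conn_open :: "'a::topological_space set \<Rightarrow> bool" where
  "conn_open U \<longleftrightarrow> open U \<and> connected U"

definition vf_sheaf :: "('a::topological_space, 'e::euclidean_space) chart set \<Rightarrow> ('a set \<Rightarrow> ('a, 'e) vfield set) \<Rightarrow> bool" where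
  "vf_sheaf A \<F> \<longleftrightarrow>
     (\<forall>U. conn_open U \<longrightarrow> \<F> U \<subseteq> vfields A U \<and> lin_subspace (\<F> U)) \<and>
     (\<forall>U V K. conn_open U \<and> conn_open V \<and> V \<subseteq> U \<and> K \<in> \<F> U \<longrightarrow> vf_restrict V K \<in> \<F> V) \<and>
     (\<forall>U \<U> K. conn_open U \<and> (\<forall>W\<in>\<U>. conn_open W) \<and> \<Union>\<U> = U \<and> K \<in> vfields A U \<and>
        (\<forall>W\<in>\<U>. vf_restrict W K \<in> \<F> W) \<longrightarrow> K \<in> \<F> U)"

definition unique_continuation :: "('a::topological_space set \<Rightarrow> ('a, 'e::real_vector) vfield set) \<Rightarrow> bool" where
  "unique_continuation \<F> \<longleftrightarrow>
     (\<forall>U K W. conn_open U \<and> K \<in> \<F> U \<and> open W \<and> W \<noteq> {} \<and> W \<subseteq> U \<and> (\<forall>p\<in>W. \<forall>c. K p c = 0)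
        \<longrightarrow> K = vf_zero)"

definition bounded_rank :: "('a::topological_space set \<Rightarrow> ('a, 'e::real_vector) vfield set) \<Rightarrow> bool" where
  "bounded_rank \<F> \<longleftrightarrow> (\<exists>N::nat. \<forall>U. conn_open U \<longrightarrow>
     (\<forall>B. B \<subseteq> \<F> U \<and> lin_indep B \<longrightarrow> finite B \<and> card B \<le> N))"

definition admissible :: "('a::topological_space set \<Rightarrow> ('a, 'e::real_vector) vfield set) \<Rightarrow> bool" where
  "admissible \<F> \<longleftrightarrow> unique_continuation \<F> \<and> bounded_rank \<F>"

definition germ :: "'a::topological_space \<Rightarrow> ('a, 'e) vfield \<Rightarrow> ('a, 'e) vfield set" where
  "germ p K = {K'. \<exists>W. open W \<and> p \<in> W \<and> (\<forall>x\<in>W. K' x = K x)}"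

definition germs :: "('a::topological_space set \<Rightarrow> ('a, 'e) vfield set) \<Rightarrow> 'a \<Rightarrow> ('a, 'e) vfield set set" where
  "germs \<F> p = {germ p K | K U. conn_open U \<and> p \<in> U \<and> K \<in> \<F> U}"

definition germ_indep :: "'a::topological_space \<Rightarrow> ('a, 'e::real_vector) vfield set \<Rightarrow> bool" where
  "germ_indep p B \<longleftrightarrow> (\<forall>B' c. finite B' \<and> B' \<subseteq> B \<and>
      (\<lambda>q d. \<Sum>K\<in>B'. c K *\<^sub>R K q d) \<in> germ p vf_zero \<longrightarrow> (\<forall>K\<in>B'. c K = 0))"

text \<open>\<open>\<kappa>_p = dim \<GG>_p\<close>: the maximal number of local sections near p with linearly
  independent germs (i.e. the dimension of the germ space, which is finite for
  sheaves of bounded rank).\<close>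
definition germ_dim :: "('a::topological_space set \<Rightarrow> ('a, 'e::real_vector) vfield set) \<Rightarrow> 'a \<Rightarrow> nat" where
  "germ_dim \<F> p = Sup {card B | B. finite B \<and> germ_indep p B \<and> inj_on (germ p) B \<and>
      (\<forall>K\<in>B. \<exists>U. conn_open U \<and> p \<in> U \<and> K \<in> \<F> U)}"

definition germ_transport :: "('a::topological_space set \<Rightarrow> ('a, 'e) vfield set) \<Rightarrow> (real \<Rightarrow> 'a) \<Rightarrow> real \<Rightarrow> real \<Rightarrow> (real \<Rightarrow> ('a, 'e) vfield set) \<Rightarrow> bool" where
  "germ_transport \<F> \<gamma> a b g \<longleftrightarrow>
     (\<forall>t\<in>{a..b}. g t \<in> germs \<F> (\<gamma> t)) \<and>
     (\<forall>s\<in>{a..b}. \<exists>\<epsilon>>0. \<exists>W K. conn_open W \<and> \<gamma> s \<in> W \<and> K \<in> \<F> W \<and>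
        (\<forall>t\<in>{a..b}. \<bar>t - s\<bar> < \<epsilon> \<longrightarrow> \<gamma> t \<in> W \<and> g t = germ (\<gamma> t) K))"

end

theory Submission
  imports Defs
begin


lemma loc_const:
  fixes P :: "real \<Rightarrow> bool"
  assumes loc: "\<forall>s\<in>{a..b}. \<exists>e>0. \<forall>t\<in>{a..b}. \<bar>t - s\<bar> < e \<longrightarrow> (P t \<longleftrightarrow> P s)"
    and "a \<le> b" "P a"
  shows "\<forall>t\<in>{a..b}. P t"
proof -
  let ?S = "{a..b}"
  let ?T = "{t\<in>?S. P t}"
  have o1: "openin (top_of_set ?S) ?T"
    unfolding openin_euclidean_subtopology_iff
  proof (intro conjI ballI)
    fix x assume x: "x \<in> ?T"
    then obtain e where e: "e>0" and he: "\<forall>t\<in>?S. \<bar>t - x\<bar> < e \<longrightarrow> (P t \<longleftrightarrow> P x)" using loc by blast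
    show "\<exists>e>0. \<forall>x'\<in>?S. dist x' x < e \<longrightarrow> x' \<in> ?T"
    proof (rule exI[of _ e], intro conjI ballI impI)
      fix x' assume x': "x' \<in> ?S" "dist x' x < e"
      then have "\<bar>x' - x\<bar> < e" by (simp add: dist_real_def)
      then have "P x' = P x" using he x' by blast
      then show "x' \<in> ?T" using x x' by simp
    qed (rule e)
  qed auto
  have o2: "openin (top_of_set ?S) (?S - ?T)"
    unfolding openin_euclidean_subtopology_iff
  proof (intro conjI ballI)
    fix x assume x: "x \<in> ?S - ?T"
    then obtain e where e: "e>0" and he: "\<forall>t\<in>?S. \<bar>t - x\<bar> < e \<longrightarrow> (P t \<longleftrightarrow> P x)" using loc by blast
    show "\<exists>e>0. \<forall>x'\<in>?S. dist x' x < e \<longrightarrow> x' \<in> ?S - ?T"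
    proof (rule exI[of _ e], intro conjI ballI impI)
      fix x' assume x': "x' \<in> ?S" "dist x' x < e"
      then have "\<bar>x' - x\<bar> < e" by (simp add: dist_real_def)
      then have "P x' = P x" using he x' by blast
      then show "x' \<in> ?S - ?T" using x x' by simp
    qed (rule e)
  qed auto
  have c: "closedin (top_of_set ?S) ?T"
    unfolding closedin_def using o2 by auto
  have "?T = {} \<or> ?T = ?S" using connected_clopen[of ?S] connected_Icc o1 c by blast
  moreover have "a \<in> ?T" using assms by auto
  ultimately show ?thesis by auto
qed

lemma loc_conn:
  fixes A :: "('a::topological_space, 'e::euclidean_space) chart set"
    and p :: 'a and Om :: "'a set"
  assumes man: "smooth_manifold A" and Om: "open Om" "p \<in> Om"
  shows "\<exists>C. conn_open C \<and> p \<in> C \<and> C \<subseteq> Om"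
proof -
  have at: "smooth_atlas A" using man by (simp add: smooth_manifold_def)
  then have "p \<in> \<Union>(snd ` A)" by (simp add: smooth_atlas_def)
  then obtain \<phi> V where cA: "(\<phi>, V) \<in> A" and pV: "p \<in> V" by auto
  have ch: "is_chart (\<phi>, V)" using at cA by (simp add: smooth_atlas_def)
  then have oV: "open V" and oI: "open (\<phi> ` V)" and inj: "inj_on \<phi> V"
    and c1: "continuous_on V \<phi>" and c2: "continuous_on (\<phi> ` V) (inv_into V \<phi>)"
    by (auto simp: is_chart_def)
  let ?g = "inv_into V \<phi>"
  let ?T = "?g -` (V \<inter> Om) \<inter> \<phi> ` V"
  have oT: "open ?T" using c2 oI oV Om(1) continuous_on_open_vimage[OF oI] open_Int[OF oV Om(1)] by blast
  have pT: "\<phi> p \<in> ?T" using pV Om inj by (auto simp: inv_into_f_f)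
  obtain e where e: "e > 0" "ball (\<phi> p) e \<subseteq> ?T" using oT pT open_contains_ball by blast
  let ?C = "?g ` ball (\<phi> p) e"
  have conn: "connected ?C"
    by (rule connected_continuous_image[OF continuous_on_subset[OF c2]]) (use e in auto)
  have eqC: "?C = \<phi> -` ball (\<phi> p) e \<inter> V"
  proof
    show "?C \<subseteq> \<phi> -` ball (\<phi> p) e \<inter> V"
    proof
      fix x assume "x \<in> ?C"
      then obtain z where z: "z \<in> ball (\<phi> p) e" "x = ?g z" by auto
      then have "z \<in> \<phi> ` V" using e by auto
      then show "x \<in> \<phi> -` ball (\<phi> p) e \<inter> V" using z by (auto simp: f_inv_into_f inv_into_into)
    qed
    show "\<phi> -` ball (\<phi> p) e \<inter> V \<subseteq> ?C"
    proof
      fix x assume x: "x \<in> \<phi> -` ball (\<phi> p) e \<inter> V"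
      then have "x = ?g (\<phi> x)" using inj by (simp add: inv_into_f_f)
      then show "x \<in> ?C" using x by auto
    qed
  qed
  have oC: "open ?C" using eqC c1 oV by (simp add: continuous_on_open_vimage)
  have "p \<in> ?C" using eqC pV e by auto
  moreover have "?C \<subseteq> Om" using e by auto
  ultimately show ?thesis using conn oC by (auto simp: conn_open_def)
qed



lemma sheaf_c1: assumes "vf_sheaf A F" "conn_open U" shows "F U \<subseteq> vfields A U \<and> lin_subspace (F U)"
  using assms(1)[unfolded vf_sheaf_def, THEN conjunct1, rule_format, OF assms(2)] .
lemma sheaf_sub: assumes "vf_sheaf A F" "conn_open U" "K \<in> F U" shows "K \<in> vfields A U"
  using sheaf_c1[OF assms(1,2), THEN conjunct1] assms(3) by (rule subsetD)
lemma sheaf_lin: assumes "vf_sheaf A F" "conn_open U" shows "lin_subspace (F U)"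
  using sheaf_c1[OF assms(1,2)] by (rule conjunct2)
lemma sheaf_restr: assumes "vf_sheaf A F" "conn_open U" "conn_open V" "V \<subseteq> U" "K \<in> F U"
   shows "vf_restrict V K \<in> F V"
  using assms(1)[unfolded vf_sheaf_def, THEN conjunct2, THEN conjunct1, rule_format] assms(2-5) by simp
lemma sheaf_add: assumes "vf_sheaf A F" "conn_open U" "X \<in> F U" "Y \<in> F U" shows "(\<lambda>p c. X p c + Y p c) \<in> F U"
  using sheaf_lin[OF assms(1,2), unfolded lin_subspace_def, THEN conjunct2, THEN conjunct1] assms(3,4) by simp
lemma sheaf_scal: assumes "vf_sheaf A F" "conn_open U" "X \<in> F U" shows "(\<lambda>p c. r *\<^sub>R X p c) \<in> F U"
  using sheaf_lin[OF assms(1,2), unfolded lin_subspace_def, THEN conjunct2, THEN conjunct2] assms(3) by simp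

lemma sheaf_sum:
  assumes "vf_sheaf A F" "conn_open U" "finite B" "B \<subseteq> F U"
  shows "(\<lambda>x d. \<Sum>K\<in>B. c K *\<^sub>R K x d) \<in> F U"
  using assms(3,4)
proof (induction B rule: finite_induct)
  case empty
  then show ?case using sheaf_lin[OF assms(1,2)] by (simp add: lin_subspace_def vf_zero_def)
next
  case (insert k B)
  have a: "(\<lambda>x d. c k *\<^sub>R k x d) \<in> F U" using sheaf_scal[OF assms(1,2), of k] insert by simp
  have b: "(\<lambda>x d. \<Sum>K\<in>B. c K *\<^sub>R K x d) \<in> F U" using insert by simp
  have "(\<lambda>x d. c k *\<^sub>R k x d + (\<Sum>K\<in>B. c K *\<^sub>R K x d)) \<in> F U"
    using sheaf_add[OF assms(1,2) a b] by simp
  then show ?case using insert by simp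
qed

lemma sheaf_diff:
  assumes "vf_sheaf A F" "conn_open U" "X \<in> F U" "Y \<in> F U"
  shows "(\<lambda>x d. X x d - Y x d) \<in> F U"
proof -
  have a: "(\<lambda>x d. (-1::real) *\<^sub>R Y x d) \<in> F U" using sheaf_scal[OF assms(1,2,4)] .
  have "(\<lambda>x d. X x d + (-1::real) *\<^sub>R Y x d) \<in> F U" using sheaf_add[OF assms(1,2,3) a] by simp
  then show ?thesis by simp
qed

lemma germ_self: "K \<in> germ p K"
  unfolding germ_def by auto

lemma germ_eq: "germ p X = germ p Y \<longleftrightarrow> (\<exists>W. open W \<and> p \<in> W \<and> (\<forall>x\<in>W. X x = Y x))"
proof
  assume "germ p X = germ p Y"
  then have "X \<in> germ p Y" using germ_self by metis
  then show "\<exists>W. open W \<and> p \<in> W \<and> (\<forall>x\<in>W. X x = Y x)" unfolding germ_def by auto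
next
  assume "\<exists>W. open W \<and> p \<in> W \<and> (\<forall>x\<in>W. X x = Y x)"
  then obtain W where W: "open W" "p \<in> W" "\<forall>x\<in>W. X x = Y x" by blast
  show "germ p X = germ p Y"
  proof
    show "germ p X \<subseteq> germ p Y"
    proof
      fix K assume "K \<in> germ p X"
      then obtain W' where "open W'" "p \<in> W'" "\<forall>x\<in>W'. K x = X x" unfolding germ_def by auto
      then show "K \<in> germ p Y" unfolding germ_def using W
        by (intro CollectI exI[of _ "W \<inter> W'"]) auto
    qed
    show "germ p Y \<subseteq> germ p X"
    proof
      fix K assume "K \<in> germ p Y"
      then obtain W' where "open W'" "p \<in> W'" "\<forall>x\<in>W'. K x = Y x" unfolding germ_def by auto
      then show "K \<in> germ p X" unfolding germ_def using W
        by (intro CollectI exI[of _ "W \<inter> W'"]) auto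
    qed
  qed
qed

lemma germ_zero_iff: "S \<in> germ p vf_zero \<longleftrightarrow> (\<exists>W. open W \<and> p \<in> W \<and> (\<forall>x\<in>W. \<forall>d. S x d = 0))"
  unfolding germ_def vf_zero_def by (auto simp: fun_eq_iff)

lemma uc_apply: "unique_continuation F \<Longrightarrow> conn_open U \<Longrightarrow> K \<in> F U \<Longrightarrow> open W \<Longrightarrow> W \<noteq> {}
  \<Longrightarrow> W \<subseteq> U \<Longrightarrow> \<forall>p\<in>W. \<forall>c. K p c = 0 \<Longrightarrow> K = vf_zero"
  unfolding unique_continuation_def by blast

lemma agree_conn:
  assumes sh: "vf_sheaf A F" and uc: "unique_continuation F"
    and C: "conn_open C" and W1: "conn_open W1" and W2: "conn_open W2"
    and sub: "C \<subseteq> W1" "C \<subseteq> W2" and K1: "K1 \<in> F W1" and K2: "K2 \<in> F W2"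
    and q: "q \<in> C" and g: "germ q K1 = germ q K2"
  shows "\<forall>x\<in>C. K1 x = K2 x"
proof -
  have r1: "vf_restrict C K1 \<in> F C" using sheaf_restr[OF sh W1 C sub(1) K1] .
  have r2: "vf_restrict C K2 \<in> F C" using sheaf_restr[OF sh W2 C sub(2) K2] .
  let ?D = "\<lambda>x d. vf_restrict C K1 x d - vf_restrict C K2 x d"
  have D: "?D \<in> F C" using sheaf_diff[OF sh C r1 r2] .
  obtain Om where Om: "open Om" "q \<in> Om" "\<forall>x\<in>Om. K1 x = K2 x" using g germ_eq by metis
  have oC: "open C" using C by (simp add: conn_open_def)
  have van: "\<forall>p\<in>Om \<inter> C. \<forall>c. ?D p c = 0" using Om by (auto simp: vf_restrict_def)
  have "?D = vf_zero"
    by (rule uc_apply[OF uc C D]) (use Om oC q van in auto)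
  then have e: "?D = (\<lambda>p c. 0)" by (simp add: vf_zero_def)
  have e2: "vf_restrict C K1 x d = vf_restrict C K2 x d" for x d
    using fun_cong[OF fun_cong[OF e, of x], of d] by (simp only: right_minus_eq)
  show ?thesis
  proof
    fix x assume "x \<in> C"
    show "K1 x = K2 x"
    proof
      fix d show "K1 x d = K2 x d" using e2[of x d] \<open>x \<in> C\<close> unfolding vf_restrict_def by (simp only: if_True)
    qed
  qed
qed

lemma indep_inj: "germ_indep q B \<Longrightarrow> inj_on (germ q) B"
proof (rule inj_onI, rule ccontr)
  fix K1 K2 assume ind: "germ_indep q B" and k: "K1 \<in> B" "K2 \<in> B" "germ q K1 = germ q K2" "K1 \<noteq> K2"
  obtain W where W: "open W" "q \<in> W" "\<forall>x\<in>W. K1 x = K2 x" using k(3) germ_eq by metis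
  define c where "c = (\<lambda>K. if K = K1 then 1 else (-1::real))"
  have s: "(\<Sum>K\<in>{K1,K2}. c K *\<^sub>R K x d) = K1 x d - K2 x d" for x d
    using k(4) by (simp add: c_def)
  have "\<forall>x\<in>W. \<forall>d. (\<Sum>K\<in>{K1,K2}. c K *\<^sub>R K x d) = 0"
    using W(3) by (simp only: s) simp
  then have mem: "(\<lambda>x d. \<Sum>K\<in>{K1,K2}. c K *\<^sub>R K x d) \<in> germ q vf_zero"
    unfolding germ_zero_iff using W(1,2) by blast
  have "finite {K1,K2}" "{K1,K2} \<subseteq> B" using k by auto
  then have "\<forall>K\<in>{K1,K2}. c K = 0" using ind mem unfolding germ_indep_def by blast
  then have "c K1 = 0" by blast
  then show False by (simp add: c_def)
qed



lemma loc_const2: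
  fixes P :: "real \<Rightarrow> bool"
  assumes loc: "\<forall>s\<in>{a..b}. \<exists>e>0. \<forall>t\<in>{a..b}. \<bar>t - s\<bar> < e \<longrightarrow> (P t \<longleftrightarrow> P s)"
    and t: "t \<in> {a..b}" and u: "u \<in> {a..b}"
  shows "P t \<longleftrightarrow> P u"
proof -
  have ab: "a \<le> b" using t by simp
  have "\<forall>s\<in>{a..b}. \<exists>e>0. \<forall>t\<in>{a..b}. \<bar>t - s\<bar> < e \<longrightarrow> ((P t \<longleftrightarrow> P a) \<longleftrightarrow> (P s \<longleftrightarrow> P a))"
  proof
    fix s assume "s \<in> {a..b}"
    then obtain e where e: "e > 0" and he: "\<forall>t\<in>{a..b}. \<bar>t - s\<bar> < e \<longrightarrow> (P t \<longleftrightarrow> P s)" using loc by blast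
    show "\<exists>e>0. \<forall>t\<in>{a..b}. \<bar>t - s\<bar> < e \<longrightarrow> ((P t \<longleftrightarrow> P a) \<longleftrightarrow> (P s \<longleftrightarrow> P a))"
    proof (rule exI[of _ e], intro conjI ballI impI)
      fix t assume "t \<in> {a..b}" "\<bar>t - s\<bar> < e"
      then have "P t \<longleftrightarrow> P s" using he by blast
      then show "(P t \<longleftrightarrow> P a) \<longleftrightarrow> (P s \<longleftrightarrow> P a)" by simp
    qed (rule e)
  qed
  from loc_const[OF this ab] have h: "\<forall>t\<in>{a..b}. (P t \<longleftrightarrow> P a)" by blast
  have "P t \<longleftrightarrow> P a" using bspec[OF h t] .
  moreover have "P u \<longleftrightarrow> P a" using bspec[OF h u] .
  ultimately show ?thesis by blast
qed

lemma cont_win: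
  fixes \<gamma> :: "real \<Rightarrow> 'a::topological_space"
  assumes "continuous_on S \<gamma>" "s \<in> S" "open C" "\<gamma> s \<in> C"
  shows "\<exists>\<delta>>0. \<forall>t\<in>S. \<bar>t - s\<bar> < \<delta> \<longrightarrow> \<gamma> t \<in> C"
proof -
  obtain B where B: "open B" "s \<in> B" "\<forall>y\<in>S. y \<in> B \<longrightarrow> \<gamma> y \<in> C"
    using assms unfolding continuous_on_topological by meson
  obtain e where e: "e > 0" "ball s e \<subseteq> B" using B open_contains_ball by blast
  have "\<forall>t\<in>S. \<bar>t - s\<bar> < e \<longrightarrow> \<gamma> t \<in> C"
  proof (intro ballI impI)
    fix t assume "t \<in> S" "\<bar>t - s\<bar> < e"
    then have "t \<in> ball s e" by (simp add: dist_real_def abs_minus_commute)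
    then show "\<gamma> t \<in> C" using e B \<open>t \<in> S\<close> by blast
  qed
  then show ?thesis using e by blast
qed

lemma germs_I: "conn_open U \<Longrightarrow> p \<in> U \<Longrightarrow> K \<in> F U \<Longrightarrow> germ p K \<in> germs F p"
  unfolding germs_def by blast

lemma germs_E: "g \<in> germs F p \<Longrightarrow> \<exists>K U. conn_open U \<and> p \<in> U \<and> K \<in> F U \<and> g = germ p K"
  unfolding germs_def by blast

lemma gt_mem: "germ_transport F \<gamma> a b g \<Longrightarrow> t \<in> {a..b} \<Longrightarrow> g t \<in> germs F (\<gamma> t)"
  unfolding germ_transport_def by blast

lemma gt_loc: "germ_transport F \<gamma> a b g \<Longrightarrow> s \<in> {a..b} \<Longrightarrow>
   \<exists>\<epsilon>>0. \<exists>W K. conn_open W \<and> \<gamma> s \<in> W \<and> K \<in> F W \<and>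
        (\<forall>t\<in>{a..b}. \<bar>t - s\<bar> < \<epsilon> \<longrightarrow> \<gamma> t \<in> W \<and> g t = germ (\<gamma> t) K)"
  unfolding germ_transport_def by blast

lemma gt_intro:
  assumes "\<And>t. t \<in> {a..b} \<Longrightarrow> g t \<in> germs F (\<gamma> t)"
    and "\<And>s. s \<in> {a..b} \<Longrightarrow> \<exists>\<epsilon>>0. \<exists>W K. conn_open W \<and> \<gamma> s \<in> W \<and> K \<in> F W \<and>
        (\<forall>t\<in>{a..b}. \<bar>t - s\<bar> < \<epsilon> \<longrightarrow> \<gamma> t \<in> W \<and> g t = germ (\<gamma> t) K)"
  shows "germ_transport F \<gamma> a b g"
proof -
  have 1: "\<forall>t\<in>{a..b}. g t \<in> germs F (\<gamma> t)" by (intro ballI assms(1))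
  have 2: "\<forall>s\<in>{a..b}. \<exists>\<epsilon>>0. \<exists>W K. conn_open W \<and> \<gamma> s \<in> W \<and> K \<in> F W \<and>
        (\<forall>t\<in>{a..b}. \<bar>t - s\<bar> < \<epsilon> \<longrightarrow> \<gamma> t \<in> W \<and> g t = germ (\<gamma> t) K)" by (intro ballI assms(2))
  show ?thesis unfolding germ_transport_def using 1 2 by (rule conjI)
qed

lemma loc_I:
  assumes "\<epsilon> > 0" "conn_open W" "\<gamma> s \<in> W" "K \<in> F W"
    "\<forall>t\<in>S. \<bar>t - s\<bar> < \<epsilon> \<longrightarrow> \<gamma> t \<in> W \<and> g t = germ (\<gamma> t) K"
  shows "\<exists>\<epsilon>>0. \<exists>W K. conn_open W \<and> \<gamma> s \<in> W \<and> K \<in> F W \<and>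
        (\<forall>t\<in>S. \<bar>t - s\<bar> < \<epsilon> \<longrightarrow> \<gamma> t \<in> W \<and> g t = germ (\<gamma> t) K)"
  apply (rule exI[of _ \<epsilon>]) apply (rule conjI[OF assms(1)])
  apply (rule exI[of _ W]) apply (rule exI[of _ K])
  using assms(2-5) by (intro conjI)

lemma gt_restrict:
  assumes g: "germ_transport F \<gamma> a b g" and "a \<le> c" "d \<le> b"
  shows "germ_transport F \<gamma> c d g"
proof (rule gt_intro)
  fix t assume "t \<in> {c..d}"
  then have "t \<in> {a..b}" using assms by auto
  then show "g t \<in> germs F (\<gamma> t)" by (rule gt_mem[OF g])
next
  fix s assume "s \<in> {c..d}"
  then have s: "s \<in> {a..b}" using assms by auto
  obtain \<epsilon> W K where e: "\<epsilon> > 0" "conn_open W" "\<gamma> s \<in> W" "K \<in> F W"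
    "\<forall>t\<in>{a..b}. \<bar>t - s\<bar> < \<epsilon> \<longrightarrow> \<gamma> t \<in> W \<and> g t = germ (\<gamma> t) K"
    using gt_loc[OF g s] by (elim exE conjE) (rule that)
  have sub: "{c..d} \<subseteq> {a..b}" using assms by auto
  have "\<forall>t\<in>{c..d}. \<bar>t - s\<bar> < \<epsilon> \<longrightarrow> \<gamma> t \<in> W \<and> g t = germ (\<gamma> t) K"
  proof (intro ballI impI)
    fix t assume "t \<in> {c..d}" "\<bar>t - s\<bar> < \<epsilon>"
    then show "\<gamma> t \<in> W \<and> g t = germ (\<gamma> t) K" using e(5) sub by blast
  qed
  then show "\<exists>\<epsilon>>0. \<exists>W K. conn_open W \<and> \<gamma> s \<in> W \<and> K \<in> F W \<and>
        (\<forall>t\<in>{c..d}. \<bar>t - s\<bar> < \<epsilon> \<longrightarrow> \<gamma> t \<in> W \<and> g t = germ (\<gamma> t) K)"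
    by (rule loc_I[of \<epsilon> W \<gamma> s K F _ g, OF e(1-4)])
qed

lemma gt_const:
  assumes C: "conn_open C" and K: "K \<in> F C" and in_C: "\<forall>u\<in>{c..d}. \<gamma> u \<in> C"
  shows "germ_transport F \<gamma> c d (\<lambda>u. germ (\<gamma> u) K)"
proof (rule gt_intro)
  fix t assume "t \<in> {c..d}"
  then have "\<gamma> t \<in> C" using in_C by blast
  then show "germ (\<gamma> t) K \<in> germs F (\<gamma> t)" by (rule germs_I[of C _ K F, OF C _ K])
next
  fix s assume s: "s \<in> {c..d}"
  have "\<forall>t\<in>{c..d}. \<bar>t - s\<bar> < 1 \<longrightarrow> \<gamma> t \<in> C \<and> germ (\<gamma> t) K = germ (\<gamma> t) K"
    using in_C by blast
  moreover have "\<gamma> s \<in> C" using in_C s by blast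
  ultimately show "\<exists>\<epsilon>>0. \<exists>W K'. conn_open W \<and> \<gamma> s \<in> W \<and> K' \<in> F W \<and>
        (\<forall>t\<in>{c..d}. \<bar>t - s\<bar> < \<epsilon> \<longrightarrow> \<gamma> t \<in> W \<and> germ (\<gamma> t) K = germ (\<gamma> t) K')"
    using loc_I[of "1::real" C \<gamma> s K F "{c..d}" "\<lambda>u. germ (\<gamma> u) K"] C K by simp
qed

lemma germ_agree_iff:
  assumes sh: "vf_sheaf A F" and uc: "unique_continuation F"
    and C: "conn_open C" and W1: "conn_open W1" and W2: "conn_open W2"
    and sub: "C \<subseteq> W1" "C \<subseteq> W2" and K1: "K1 \<in> F W1" and K2: "K2 \<in> F W2"
    and q: "q \<in> C"
  shows "germ q K1 = germ q K2 \<longleftrightarrow> (\<forall>x\<in>C. K1 x = K2 x)"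
proof
  assume "germ q K1 = germ q K2"
  then show "\<forall>x\<in>C. K1 x = K2 x" by (rule agree_conn[OF sh uc C W1 W2 sub K1 K2 q])
next
  assume h: "\<forall>x\<in>C. K1 x = K2 x"
  have "open C" using C by (simp add: conn_open_def)
  then show "germ q K1 = germ q K2" unfolding germ_eq using h q by blast
qed

lemma gt_unique:
  fixes A :: "('a::topological_space, 'e::euclidean_space) chart set"
    and F :: "'a set \<Rightarrow> ('a, 'e) vfield set"
  assumes sh: "vf_sheaf A F" and uc: "unique_continuation F" and man: "smooth_manifold A"
    and cont: "continuous_on {a..b} \<gamma>"
    and g: "germ_transport F \<gamma> a b g" and h: "germ_transport F \<gamma> a b h"
    and t0: "t0 \<in> {a..b}" and eq0: "g t0 = h t0"
  shows "\<forall>t\<in>{a..b}. g t = h t"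
proof -
  have "\<forall>s\<in>{a..b}. \<exists>e>0. \<forall>t\<in>{a..b}. \<bar>t - s\<bar> < e \<longrightarrow> ((g t = h t) \<longleftrightarrow> (g s = h s))"
  proof
    fix s assume s: "s \<in> {a..b}"
    obtain \<epsilon>1 W1 K1 where e1: "\<epsilon>1 > 0" "conn_open W1" "\<gamma> s \<in> W1" "K1 \<in> F W1"
      "\<forall>t\<in>{a..b}. \<bar>t - s\<bar> < \<epsilon>1 \<longrightarrow> \<gamma> t \<in> W1 \<and> g t = germ (\<gamma> t) K1"
      using gt_loc[OF g s] by (elim exE conjE) (rule that)
    obtain \<epsilon>2 W2 K2 where e2: "\<epsilon>2 > 0" "conn_open W2" "\<gamma> s \<in> W2" "K2 \<in> F W2"
      "\<forall>t\<in>{a..b}. \<bar>t - s\<bar> < \<epsilon>2 \<longrightarrow> \<gamma> t \<in> W2 \<and> h t = germ (\<gamma> t) K2"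
      using gt_loc[OF h s] by (elim exE conjE) (rule that)
    have o12: "open (W1 \<inter> W2)" using e1(2) e2(2) by (simp add: conn_open_def open_Int)
    have i12: "\<gamma> s \<in> W1 \<inter> W2" using e1(3) e2(3) by blast
    obtain C where C: "conn_open C" "\<gamma> s \<in> C" "C \<subseteq> W1 \<inter> W2"
      using loc_conn[OF man o12 i12] by (elim exE conjE) (rule that)
    have oC: "open C" using C(1) by (simp add: conn_open_def)
    obtain \<delta> where d: "\<delta> > 0" "\<forall>t\<in>{a..b}. \<bar>t - s\<bar> < \<delta> \<longrightarrow> \<gamma> t \<in> C"
      using cont_win[OF cont s oC C(2)] by (elim exE conjE) (rule that)
    have sub: "C \<subseteq> W1" "C \<subseteq> W2" using C(3) by auto
    define m where "m = min \<epsilon>1 (min \<epsilon>2 \<delta>)"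
    have m: "m > 0" "m \<le> \<epsilon>1" "m \<le> \<epsilon>2" "m \<le> \<delta>" using e1(1) e2(1) d(1) by (auto simp: m_def)
    have key: "g t = h t \<longleftrightarrow> (\<forall>x\<in>C. K1 x = K2 x)"
      if "t \<in> {a..b}" "\<bar>t - s\<bar> < m" for t
    proof -
      have "\<bar>t - s\<bar> < \<epsilon>1" "\<bar>t - s\<bar> < \<epsilon>2" "\<bar>t - s\<bar> < \<delta>" using that(2) m by linarith+
      then have "g t = germ (\<gamma> t) K1" "h t = germ (\<gamma> t) K2" "\<gamma> t \<in> C"
        using that(1) e1(5) e2(5) d(2) by blast+
      moreover have "germ (\<gamma> t) K1 = germ (\<gamma> t) K2 \<longleftrightarrow> (\<forall>x\<in>C. K1 x = K2 x)"
        by (rule germ_agree_iff[OF sh uc C(1) e1(2) e2(2) sub e1(4) e2(4) \<open>\<gamma> t \<in> C\<close>])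
      ultimately show ?thesis by simp
    qed
    have ks: "g s = h s \<longleftrightarrow> (\<forall>x\<in>C. K1 x = K2 x)" using key[OF s] m(1) by simp
    have "\<forall>t\<in>{a..b}. \<bar>t - s\<bar> < m \<longrightarrow> ((g t = h t) \<longleftrightarrow> (g s = h s))"
    proof (intro ballI impI)
      fix t assume "t \<in> {a..b}" "\<bar>t - s\<bar> < m"
      note k1 = key[OF this]
      show "(g t = h t) \<longleftrightarrow> (g s = h s)" using k1 ks by blast
    qed
    then show "\<exists>e>0. \<forall>t\<in>{a..b}. \<bar>t - s\<bar> < e \<longrightarrow> ((g t = h t) \<longleftrightarrow> (g s = h s))"
      using m(1) by blast
  qed
  then show ?thesis using loc_const2[where P="\<lambda>t. g t = h t"] t0 eq0 by blast
qed



lemma restrict_eq_on: "x \<in> C \<Longrightarrow> vf_restrict C K x = K x"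
  by (simp add: vf_restrict_def)

lemma germ_on: "open C \<Longrightarrow> p \<in> C \<Longrightarrow> \<forall>x\<in>C. X x = Y x \<Longrightarrow> germ p X = germ p Y"
  unfolding germ_eq by blast

lemma gt_glue:
  fixes A :: "('a::topological_space, 'e::euclidean_space) chart set"
    and F :: "'a set \<Rightarrow> ('a, 'e) vfield set"
  assumes sh: "vf_sheaf A F" and uc: "unique_continuation F" and man: "smooth_manifold A"
    and cont: "continuous_on {a..b} \<gamma>" and am: "a \<le> m" and mb: "m \<le> b"
    and g: "germ_transport F \<gamma> a m g" and h: "germ_transport F \<gamma> m b h" and eqm: "g m = h m"
  shows "germ_transport F \<gamma> a b (\<lambda>t. if t \<le> m then g t else h t)"
proof (rule gt_intro)
  fix t assume t: "t \<in> {a..b}"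
  show "(if t \<le> m then g t else h t) \<in> germs F (\<gamma> t)"
  proof (cases "t \<le> m")
    case True
    then have "t \<in> {a..m}" using t by simp
    then show ?thesis using gt_mem[OF g] True by simp
  next
    case False
    then have "t \<in> {m..b}" using t by simp
    then show ?thesis using gt_mem[OF h] False by simp
  qed
next
  fix s assume s: "s \<in> {a..b}"
  consider (lt) "s < m" | (eq) "s = m" | (gt) "s > m" by linarith
  then show "\<exists>\<epsilon>>0. \<exists>W K. conn_open W \<and> \<gamma> s \<in> W \<and> K \<in> F W \<and>
        (\<forall>t\<in>{a..b}. \<bar>t - s\<bar> < \<epsilon> \<longrightarrow> \<gamma> t \<in> W \<and> (if t \<le> m then g t else h t) = germ (\<gamma> t) K)"
  proof cases
    case lt
    then have s': "s \<in> {a..m}" using s by simp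
    obtain \<epsilon> W K where e: "\<epsilon> > 0" "conn_open W" "\<gamma> s \<in> W" "K \<in> F W"
      "\<forall>t\<in>{a..m}. \<bar>t - s\<bar> < \<epsilon> \<longrightarrow> \<gamma> t \<in> W \<and> g t = germ (\<gamma> t) K"
      using gt_loc[OF g s'] by (elim exE conjE) (rule that)
    have pos: "min \<epsilon> (m - s) > 0" using e(1) lt by simp
    have "\<forall>t\<in>{a..b}. \<bar>t - s\<bar> < min \<epsilon> (m - s) \<longrightarrow> \<gamma> t \<in> W \<and> (if t \<le> m then g t else h t) = germ (\<gamma> t) K"
    proof (intro ballI impI)
      fix t assume t: "t \<in> {a..b}" "\<bar>t - s\<bar> < min \<epsilon> (m - s)"
      then have tm: "t < m" "t \<in> {a..m}" "\<bar>t - s\<bar> < \<epsilon>" by auto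
      then have "\<gamma> t \<in> W \<and> g t = germ (\<gamma> t) K" using e(5) by blast
      then show "\<gamma> t \<in> W \<and> (if t \<le> m then g t else h t) = germ (\<gamma> t) K" using tm by simp
    qed
    then show ?thesis by (rule loc_I[of _ W \<gamma> s K F _ "\<lambda>t. if t \<le> m then g t else h t", OF pos e(2-4)])
  next
    case gt
    then have s': "s \<in> {m..b}" using s by simp
    obtain \<epsilon> W K where e: "\<epsilon> > 0" "conn_open W" "\<gamma> s \<in> W" "K \<in> F W"
      "\<forall>t\<in>{m..b}. \<bar>t - s\<bar> < \<epsilon> \<longrightarrow> \<gamma> t \<in> W \<and> h t = germ (\<gamma> t) K"
      using gt_loc[OF h s'] by (elim exE conjE) (rule that)
    have pos: "min \<epsilon> (s - m) > 0" using e(1) gt by simp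
    have "\<forall>t\<in>{a..b}. \<bar>t - s\<bar> < min \<epsilon> (s - m) \<longrightarrow> \<gamma> t \<in> W \<and> (if t \<le> m then g t else h t) = germ (\<gamma> t) K"
    proof (intro ballI impI)
      fix t assume t: "t \<in> {a..b}" "\<bar>t - s\<bar> < min \<epsilon> (s - m)"
      then have tm: "\<not> t \<le> m" "t \<in> {m..b}" "\<bar>t - s\<bar> < \<epsilon>" by auto
      then have "\<gamma> t \<in> W \<and> h t = germ (\<gamma> t) K" using e(5) by blast
      then show "\<gamma> t \<in> W \<and> (if t \<le> m then g t else h t) = germ (\<gamma> t) K" using tm by simp
    qed
    then show ?thesis by (rule loc_I[of _ W \<gamma> s K F _ "\<lambda>t. if t \<le> m then g t else h t", OF pos e(2-4)])
  next
    case eq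
    have m1: "m \<in> {a..m}" using am by simp
    have m2: "m \<in> {m..b}" using mb by simp
    obtain \<epsilon>1 W1 K1 where e1: "\<epsilon>1 > 0" "conn_open W1" "\<gamma> m \<in> W1" "K1 \<in> F W1"
      "\<forall>t\<in>{a..m}. \<bar>t - m\<bar> < \<epsilon>1 \<longrightarrow> \<gamma> t \<in> W1 \<and> g t = germ (\<gamma> t) K1"
      using gt_loc[OF g m1] by (elim exE conjE) (rule that)
    obtain \<epsilon>2 W2 K2 where e2: "\<epsilon>2 > 0" "conn_open W2" "\<gamma> m \<in> W2" "K2 \<in> F W2"
      "\<forall>t\<in>{m..b}. \<bar>t - m\<bar> < \<epsilon>2 \<longrightarrow> \<gamma> t \<in> W2 \<and> h t = germ (\<gamma> t) K2"
      using gt_loc[OF h m2] by (elim exE conjE) (rule that)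
    have o12: "open (W1 \<inter> W2)" using e1(2) e2(2) by (simp add: conn_open_def open_Int)
    have i12: "\<gamma> m \<in> W1 \<inter> W2" using e1(3) e2(3) by blast
    obtain C where C: "conn_open C" "\<gamma> m \<in> C" "C \<subseteq> W1 \<inter> W2"
      using loc_conn[OF man o12 i12] by (elim exE conjE) (rule that)
    have oC: "open C" using C(1) by (simp add: conn_open_def)
    have ms: "m \<in> {a..b}" using am mb by simp
    obtain \<delta> where d: "\<delta> > 0" "\<forall>t\<in>{a..b}. \<bar>t - m\<bar> < \<delta> \<longrightarrow> \<gamma> t \<in> C"
      using cont_win[OF cont ms oC C(2)] by (elim exE conjE) (rule that)
    have sub: "C \<subseteq> W1" "C \<subseteq> W2" using C(3) by auto
    have "\<bar>m - m\<bar> < \<epsilon>1" "\<bar>m - m\<bar> < \<epsilon>2" using e1(1) e2(1) by simp_all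
    then have gm: "g m = germ (\<gamma> m) K1" "h m = germ (\<gamma> m) K2" using e1(5) e2(5) m1 m2 by blast+
    have agree: "\<forall>x\<in>C. K1 x = K2 x"
      using germ_agree_iff[OF sh uc C(1) e1(2) e2(2) sub e1(4) e2(4) C(2)] gm eqm by simp
    define K where "K = vf_restrict C K1"
    have KC: "K \<in> F C" unfolding K_def by (rule sheaf_restr[OF sh e1(2) C(1) sub(1) e1(4)])
    have KK1: "\<forall>x\<in>C. K1 x = K x" unfolding K_def by (simp add: restrict_eq_on)
    have KK2: "\<forall>x\<in>C. K2 x = K x" using agree KK1 by simp
    define e where "e = min \<epsilon>1 (min \<epsilon>2 \<delta>)"
    have pos: "e > 0" using e1(1) e2(1) d(1) by (simp add: e_def)
    have "\<forall>t\<in>{a..b}. \<bar>t - m\<bar> < e \<longrightarrow> \<gamma> t \<in> C \<and> (if t \<le> m then g t else h t) = germ (\<gamma> t) K"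
    proof (intro ballI impI)
      fix t assume t: "t \<in> {a..b}" "\<bar>t - m\<bar> < e"
      then have tC: "\<gamma> t \<in> C" using d(2) by (simp add: e_def)
      show "\<gamma> t \<in> C \<and> (if t \<le> m then g t else h t) = germ (\<gamma> t) K"
      proof (cases "t \<le> m")
        case True
        then have "t \<in> {a..m}" "\<bar>t - m\<bar> < \<epsilon>1" using t by (auto simp: e_def)
        then have "g t = germ (\<gamma> t) K1" using e1(5) by blast
        also have "\<dots> = germ (\<gamma> t) K" by (rule germ_on[OF oC tC KK1])
        finally show ?thesis using True tC by simp
      next
        case False
        then have "t \<in> {m..b}" "\<bar>t - m\<bar> < \<epsilon>2" using t by (auto simp: e_def)
        then have "h t = germ (\<gamma> t) K2" using e2(5) by blast
        also have "\<dots> = germ (\<gamma> t) K" by (rule germ_on[OF oC tC KK2])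
        finally show ?thesis using False tC by simp
      qed
    qed
    then show ?thesis using eq C(2)
      using loc_I[of e C \<gamma> m K F "{a..b}" "\<lambda>t. if t \<le> m then g t else h t", OF pos C(1) C(2) KC] by simp
  qed
qed



definition dimset :: "('a::topological_space set \<Rightarrow> ('a, 'e::real_vector) vfield set) \<Rightarrow> 'a \<Rightarrow> nat set" where
  "dimset F p = {card B | B. finite B \<and> germ_indep p B \<and> inj_on (germ p) B \<and>
      (\<forall>K\<in>B. \<exists>U. conn_open U \<and> p \<in> U \<and> K \<in> F U)}"

lemma germ_dim_eq: "germ_dim F p = Sup (dimset F p)"
  unfolding germ_dim_def dimset_def ..

lemma dimsetI: "finite B \<Longrightarrow> germ_indep p B \<Longrightarrow> inj_on (germ p) B \<Longrightarrow>
      (\<forall>K\<in>B. \<exists>U. conn_open U \<and> p \<in> U \<and> K \<in> F U) \<Longrightarrow> card B \<in> dimset F p"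
  unfolding dimset_def by blast

lemma dimsetE: "n \<in> dimset F p \<Longrightarrow> \<exists>B. n = card B \<and> finite B \<and> germ_indep p B \<and> inj_on (germ p) B \<and>
      (\<forall>K\<in>B. \<exists>U. conn_open U \<and> p \<in> U \<and> K \<in> F U)"
  unfolding dimset_def by blast

lemma germ_indep_empty: "germ_indep p {}"
  unfolding germ_indep_def by simp

lemma dimset_0:
  fixes F :: "'a::topological_space set \<Rightarrow> ('a, 'e::real_vector) vfield set"
  shows "0 \<in> dimset F p"
proof -
  have "card ({}::('a, 'e) vfield set) \<in> dimset F p" by (rule dimsetI[of "{}" p F]) (simp_all add: germ_indep_empty)
  then show ?thesis by simp
qed

lemma germ_indepD: "germ_indep p B \<Longrightarrow> finite B' \<Longrightarrow> B' \<subseteq> B \<Longrightarrow>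
   (\<lambda>q d. \<Sum>K\<in>B'. c K *\<^sub>R K q d) \<in> germ p vf_zero \<Longrightarrow> K \<in> B' \<Longrightarrow> c K = 0"
  unfolding germ_indep_def by blast

lemma germ_indepI: "(\<And>B' c. finite B' \<Longrightarrow> B' \<subseteq> B \<Longrightarrow>
   (\<lambda>q d. \<Sum>K\<in>B'. c K *\<^sub>R K q d) \<in> germ p vf_zero \<Longrightarrow> \<forall>K\<in>B'. c K = 0) \<Longrightarrow> germ_indep p B"
  unfolding germ_indep_def by blast

lemma common_nbhd:
  fixes A :: "('a::topological_space, 'e::euclidean_space) chart set" and p :: 'a
  assumes man: "smooth_manifold A" and fin: "finite B"
    and UK: "\<forall>K\<in>B. open (UK K) \<and> p \<in> UK K"
  shows "\<exists>C. conn_open C \<and> p \<in> C \<and> (\<forall>K\<in>B. C \<subseteq> UK K)"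
proof -
  have o: "open (\<Inter>(UK ` B))" using fin UK by (intro open_Inter) auto
  have i: "p \<in> \<Inter>(UK ` B)" using UK by blast
  obtain C where C: "conn_open C" "p \<in> C" "C \<subseteq> \<Inter>(UK ` B)"
    using loc_conn[OF man o i] by (elim exE conjE) (rule that)
  then show ?thesis by blast
qed

lemma rc_F:
  assumes sh: "vf_sheaf A F" and C: "conn_open C"
    and UK: "\<forall>K\<in>B. \<exists>U. conn_open U \<and> C \<subseteq> U \<and> K \<in> F U"
  shows "\<forall>K\<in>B. vf_restrict C K \<in> F C"
proof
  fix K assume "K \<in> B"
  then obtain U where U: "conn_open U" "C \<subseteq> U" "K \<in> F U" using UK by blast
  show "vf_restrict C K \<in> F C" by (rule sheaf_restr[OF sh U(1) C U(2) U(3)])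
qed

lemma rc_inj:
  assumes ind: "germ_indep p B" and C: "conn_open C" and pC: "p \<in> C"
  shows "inj_on (vf_restrict C) B"
proof (rule inj_onI)
  fix K1 K2 assume k: "K1 \<in> B" "K2 \<in> B" "vf_restrict C K1 = vf_restrict C K2"
  have "\<forall>x\<in>C. K1 x = K2 x"
  proof
    fix x assume x: "x \<in> C"
    have "vf_restrict C K1 x = vf_restrict C K2 x" using k(3) by simp
    then show "K1 x = K2 x" using x by (simp add: restrict_eq_on)
  qed
  moreover have "open C" using C by (simp add: conn_open_def)
  ultimately have "germ p K1 = germ p K2" using germ_on pC by blast
  then show "K1 = K2" using indep_inj[OF ind] k(1,2) by (simp add: inj_on_def)
qed

lemma rc_ind:
  assumes sh: "vf_sheaf A F" and uc: "unique_continuation F"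
    and fin: "finite B" and ind: "germ_indep p B" and C: "conn_open C" and pC: "p \<in> C"
    and UK: "\<forall>K\<in>B. \<exists>U. conn_open U \<and> C \<subseteq> U \<and> K \<in> F U"
    and B'': "B'' \<subseteq> vf_restrict C ` B" and Om: "open Om" "Om \<noteq> {}" "Om \<subseteq> C"
    and van: "\<forall>x\<in>Om. \<forall>d. (\<Sum>K\<in>B''. c K *\<^sub>R K x d) = 0"
  shows "\<forall>K\<in>B''. c K = 0"
proof -
  have rF: "\<forall>K\<in>B. vf_restrict C K \<in> F C" by (rule rc_F[OF sh C UK])
  have inj: "inj_on (vf_restrict C) B" by (rule rc_inj[OF ind C pC])
  have fin2: "finite B''" using B'' fin by (meson finite_imageI finite_subset)
  have sub2: "B'' \<subseteq> F C" using B'' rF by blast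
  define S where "S = (\<lambda>x d. \<Sum>K\<in>B''. c K *\<^sub>R K x d)"
  have SF: "S \<in> F C" unfolding S_def by (rule sheaf_sum[OF sh C fin2 sub2])
  have "S = vf_zero" by (rule uc_apply[OF uc C SF Om]) (use van in \<open>simp add: S_def\<close>)
  then have S0: "S x d = 0" for x d by (simp add: vf_zero_def)
  define B0 where "B0 = {K\<in>B. vf_restrict C K \<in> B''}"
  have B0B: "B0 \<subseteq> B" unfolding B0_def by blast
  have im: "B'' = vf_restrict C ` B0" using B'' unfolding B0_def by blast
  have inj0: "inj_on (vf_restrict C) B0" using inj B0B by (rule inj_on_subset)
  have fin0: "finite B0" using fin B0B by (rule finite_subset[rotated])
  have eqs: "(\<Sum>K\<in>B0. c (vf_restrict C K) *\<^sub>R K x d) = S x d" if x: "x \<in> C" for x d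
  proof -
    have "(\<Sum>K\<in>B0. c (vf_restrict C K) *\<^sub>R K x d) = (\<Sum>K\<in>B0. c (vf_restrict C K) *\<^sub>R vf_restrict C K x d)"
      by (rule sum.cong[OF refl]) (simp add: restrict_eq_on x)
    also have "\<dots> = (\<Sum>K\<in>vf_restrict C ` B0. c K *\<^sub>R K x d)"
    proof -
      have "(\<Sum>K\<in>vf_restrict C ` B0. c K *\<^sub>R K x d) = (\<Sum>K\<in>B0. c (vf_restrict C K) *\<^sub>R vf_restrict C K x d)"
        using sum.reindex[OF inj0, of "\<lambda>K. c K *\<^sub>R K x d"] by (simp only: comp_def)
      then show ?thesis by (rule sym)
    qed
    also have "\<dots> = S x d" unfolding S_def im ..
    finally show ?thesis .
  qed
  have "(\<lambda>x d. \<Sum>K\<in>B0. c (vf_restrict C K) *\<^sub>R K x d) \<in> germ p vf_zero"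
    unfolding germ_zero_iff
  proof (intro exI[of _ C] conjI ballI allI)
    show "open C" using C by (simp add: conn_open_def)
    show "p \<in> C" by (rule pC)
    fix x d assume xC: "x \<in> C"
    show "(\<Sum>K\<in>B0. c (vf_restrict C K) *\<^sub>R K x d) = 0"
      by (rule trans[OF eqs[OF xC, of d] S0[of x d]])
  qed
  note mem = this
  have z: "\<forall>K\<in>B0. c (vf_restrict C K) = 0"
  proof
    fix K assume "K \<in> B0"
    then show "c (vf_restrict C K) = 0"
      by (rule germ_indepD[OF ind fin0 B0B, of "\<lambda>K. c (vf_restrict C K)", OF mem])
  qed
  show ?thesis
  proof
    fix K' assume "K' \<in> B''"
    then obtain K where "K \<in> B0" "K' = vf_restrict C K" using im by blast
    then show "c K' = 0" using z by simp
  qed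
qed

lemma dim_bound:
  fixes A :: "('a::topological_space, 'e::euclidean_space) chart set"
    and F :: "'a set \<Rightarrow> ('a, 'e) vfield set"
  assumes sh: "vf_sheaf A F" and uc: "unique_continuation F" and man: "smooth_manifold A"
    and br: "bounded_rank F"
  shows "\<exists>N. \<forall>p. \<forall>n\<in>dimset F p. n \<le> N"
proof -
  obtain N where N: "\<forall>U. conn_open U \<longrightarrow> (\<forall>B. B \<subseteq> F U \<and> lin_indep B \<longrightarrow> finite B \<and> card B \<le> N)"
    using br unfolding bounded_rank_def by (elim exE) (rule that)
  have "n \<le> N" if n: "n \<in> dimset F p" for p n
  proof -
    obtain B where B: "n = card B" "finite B" "germ_indep p B" "inj_on (germ p) B"
      "\<forall>K\<in>B. \<exists>U. conn_open U \<and> p \<in> U \<and> K \<in> F U"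
      using dimsetE[OF n] by (elim exE conjE) (rule that)
    obtain UK where UK: "\<forall>K\<in>B. conn_open (UK K) \<and> p \<in> UK K \<and> K \<in> F (UK K)"
      using bchoice[OF B(5)] by (elim exE) (rule that)
    have UKo: "\<forall>K\<in>B. open (UK K) \<and> p \<in> UK K" using UK by (simp add: conn_open_def)
    obtain C where C: "conn_open C" "p \<in> C" "\<forall>K\<in>B. C \<subseteq> UK K"
      using common_nbhd[OF man B(2) UKo] by (elim exE conjE) (rule that)
    have UK2: "\<forall>K\<in>B. \<exists>U. conn_open U \<and> C \<subseteq> U \<and> K \<in> F U"
    proof
      fix K assume k: "K \<in> B"
      show "\<exists>U. conn_open U \<and> C \<subseteq> U \<and> K \<in> F U"
        by (rule exI[of _ "UK K"]) (use UK C(3) k in simp)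
    qed
    let ?BC = "vf_restrict C ` B"
    have sub: "?BC \<subseteq> F C" using rc_F[OF sh C(1) UK2] by blast
    have oC: "open C" "C \<noteq> {}" using C(1,2) by (auto simp: conn_open_def)
    have li: "lin_indep ?BC"
      unfolding lin_indep_def
    proof (intro allI impI)
      fix B' c assume h: "finite B' \<and> B' \<subseteq> ?BC \<and> (\<lambda>p d. \<Sum>K\<in>B'. c K *\<^sub>R K p d) = vf_zero"
      have hs: "B' \<subseteq> ?BC" using h by blast
      have "(\<Sum>K\<in>B'. c K *\<^sub>R K x d) = 0" for x d
        using fun_cong[OF fun_cong[OF conjunct2[OF conjunct2[OF h]], of x], of d] by (simp add: vf_zero_def)
      then have van: "\<forall>x\<in>C. \<forall>d. (\<Sum>K\<in>B'. c K *\<^sub>R K x d) = 0" by blast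
      show "\<forall>K\<in>B'. c K = 0"
        by (rule rc_ind[OF sh uc B(2) B(3) C(1) C(2) UK2 hs oC(1) oC(2) order_refl van])
    qed
    have "finite ?BC \<and> card ?BC \<le> N" by (rule N[rule_format, OF C(1)]) (rule conjI[OF sub li])
    then have "card ?BC \<le> N" by (rule conjunct2)
    moreover have "card ?BC = card B" by (rule card_image[OF rc_inj[OF B(3) C(1) C(2)]])
    ultimately show ?thesis using B(1) by simp
  qed
  then show ?thesis by blast
qed

lemma dim_facts:
  assumes bnd: "\<forall>n\<in>dimset F p. n \<le> N"
  shows "germ_dim F p \<in> dimset F p" "\<forall>n\<in>dimset F p. n \<le> germ_dim F p"
proof -
  have fin: "finite (dimset F p)" using bnd finite_nat_set_iff_bounded_le by blast
  have ne: "dimset F p \<noteq> {}" using dimset_0 by blast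
  have e: "germ_dim F p = Max (dimset F p)" using cSup_eq_Max[OF fin ne] germ_dim_eq[of F p] by simp
  show "germ_dim F p \<in> dimset F p" unfolding e by (rule Max_in[OF fin ne])
  show "\<forall>n\<in>dimset F p. n \<le> germ_dim F p" unfolding e using Max_ge[OF fin] by blast
qed



lemma vec_solve:
  fixes v S :: "'e::real_vector"
  assumes h: "a *\<^sub>R v + S = 0" and a: "a \<noteq> 0"
  shows "v = (-1 / a) *\<^sub>R S"
proof -
  have "S = - (a *\<^sub>R v)" using h by (simp add: eq_neg_iff_add_eq_0 add.commute)
  then show ?thesis using a by simp
qed

lemma span_lemma:
  fixes F :: "'a::topological_space set \<Rightarrow> ('a, 'e::real_vector) vfield set"
  assumes dimle: "\<forall>n\<in>dimset F q. n \<le> germ_dim F q"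
    and fin: "finite B" and ind: "germ_indep q B"
    and Bin: "\<forall>K\<in>B. \<exists>U. conn_open U \<and> q \<in> U \<and> K \<in> F U"
    and cardB: "card B = germ_dim F q"
    and U: "conn_open U" and qU: "q \<in> U" and L: "L \<in> F U"
  shows "\<exists>c. germ q L = germ q (\<lambda>x d. \<Sum>K\<in>B. c K *\<^sub>R K x d)"
proof (rule ccontr)
  assume nc: "\<not> ?thesis"
  have LB: "L \<notin> B"
  proof
    assume LB: "L \<in> B"
    define c where "c = (\<lambda>K. if K = L then 1 else (0::real))"
    have "(\<lambda>x d. \<Sum>K\<in>B. c K *\<^sub>R K x d) = L"
    proof (intro ext)
      fix x d
      have "(\<Sum>K\<in>B. c K *\<^sub>R K x d) = (\<Sum>K\<in>B. if K = L then L x d else 0)"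
        by (rule sum.cong[OF refl]) (simp add: c_def)
      also have "\<dots> = L x d" using fin LB by simp
      finally show "(\<Sum>K\<in>B. c K *\<^sub>R K x d) = L x d" .
    qed
    then have "germ q L = germ q (\<lambda>x d. \<Sum>K\<in>B. c K *\<^sub>R K x d)" by simp
    then show False using nc by blast
  qed
  have ind': "germ_indep q (insert L B)"
  proof (rule germ_indepI)
    fix B'' c assume f: "finite B''" and s: "B'' \<subseteq> insert L B"
      and m: "(\<lambda>q d. \<Sum>K\<in>B''. c K *\<^sub>R K q d) \<in> germ q vf_zero"
    obtain W where W: "open W" "q \<in> W" "\<forall>x\<in>W. \<forall>d. (\<Sum>K\<in>B''. c K *\<^sub>R K x d) = 0"
      using m unfolding germ_zero_iff by (elim exE conjE) (rule that)
    define B1 where "B1 = B'' - {L}"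
    have B1B: "B1 \<subseteq> B" using s unfolding B1_def by blast
    have f1: "finite B1" using f unfolding B1_def by simp
    have split: "(\<Sum>K\<in>B''. c K *\<^sub>R K x d) = (if L \<in> B'' then c L *\<^sub>R L x d else 0) + (\<Sum>K\<in>B1. c K *\<^sub>R K x d)"
      for x d
    proof (cases "L \<in> B''")
      case True
      then show ?thesis using sum.remove[OF f True, of "\<lambda>K. c K *\<^sub>R K x d"] unfolding B1_def by simp
    next
      case False
      then have "B1 = B''" unfolding B1_def by simp
      then show ?thesis using False by simp
    qed
    show "\<forall>K\<in>B''. c K = 0"
    proof (cases "L \<in> B'' \<and> c L \<noteq> 0")
      case True
      define c' where "c' = (\<lambda>K. if K \<in> B1 then (-1 / c L) * c K else 0)"
      have eqW: "\<forall>x\<in>W. L x = (\<lambda>d. \<Sum>K\<in>B. c' K *\<^sub>R K x d)"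
      proof
        fix x assume xW: "x \<in> W"
        show "L x = (\<lambda>d. \<Sum>K\<in>B. c' K *\<^sub>R K x d)"
        proof
          fix d
          have h0: "c L *\<^sub>R L x d + (\<Sum>K\<in>B1. c K *\<^sub>R K x d) = 0"
            using split[of x d] W(3) xW True by simp
          have "L x d = (-1 / c L) *\<^sub>R (\<Sum>K\<in>B1. c K *\<^sub>R K x d)"
            by (rule vec_solve[OF h0]) (use True in simp)
          also have "\<dots> = (\<Sum>K\<in>B1. ((-1 / c L) * c K) *\<^sub>R K x d)"
            by (simp add: scaleR_sum_right)
          also have "\<dots> = (\<Sum>K\<in>B. c' K *\<^sub>R K x d)"
          proof -
            have "(\<Sum>K\<in>B. c' K *\<^sub>R K x d) = (\<Sum>K\<in>B. if K \<in> B1 then ((-1 / c L) * c K) *\<^sub>R K x d else 0)"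
              by (rule sum.cong[OF refl]) (simp add: c'_def)
            also have "\<dots> = (\<Sum>K\<in>B \<inter> B1. ((-1 / c L) * c K) *\<^sub>R K x d)"
              by (rule sum.inter_restrict[OF fin, symmetric])
            also have "B \<inter> B1 = B1" using B1B by blast
            finally show ?thesis by simp
          qed
          finally show "L x d = (\<Sum>K\<in>B. c' K *\<^sub>R K x d)" .
        qed
      qed
      have "germ q L = germ q (\<lambda>x d. \<Sum>K\<in>B. c' K *\<^sub>R K x d)"
        unfolding germ_eq using W(1,2) eqW by blast
      then show ?thesis using nc by blast
    next
      case False
      have van1: "\<forall>x\<in>W. \<forall>d. (\<Sum>K\<in>B1. c K *\<^sub>R K x d) = 0"
      proof (intro ballI allI)
        fix x d assume xW: "x \<in> W"
        have "(if L \<in> B'' then c L *\<^sub>R L x d else 0) = 0" using False by auto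
        then show "(\<Sum>K\<in>B1. c K *\<^sub>R K x d) = 0" using split[of x d] W(3) xW by simp
      qed
      have mem1: "(\<lambda>q d. \<Sum>K\<in>B1. c K *\<^sub>R K q d) \<in> germ q vf_zero"
        unfolding germ_zero_iff using W(1,2) van1 by blast
      have z1: "c K = 0" if "K \<in> B1" for K
        by (rule germ_indepD[OF ind f1 B1B mem1 that])
      show ?thesis
      proof
        fix K assume K: "K \<in> B''"
        show "c K = 0"
        proof (cases "K = L")
          case True
          then show ?thesis using False K by blast
        next
          case False
          then have "K \<in> B1" using K unfolding B1_def by blast
          then show ?thesis by (rule z1)
        qed
      qed
    qed
  qed
  have inj': "inj_on (germ q) (insert L B)" by (rule indep_inj[OF ind'])
  have nb: "\<forall>K\<in>insert L B. \<exists>U. conn_open U \<and> q \<in> U \<and> K \<in> F U"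
  proof
    fix K assume "K \<in> insert L B"
    then show "\<exists>U. conn_open U \<and> q \<in> U \<and> K \<in> F U"
    proof
      assume "K = L" then show ?thesis using U qU L by blast
    next
      assume "K \<in> B" then show ?thesis using Bin by blast
    qed
  qed
  have "card (insert L B) \<in> dimset F q"
    by (rule dimsetI[OF _ ind' inj' nb]) (use fin in simp)
  then have "card (insert L B) \<le> germ_dim F q" using dimle by blast
  moreover have "card (insert L B) = Suc (card B)" using fin LB by simp
  ultimately show False using cardB by simp
qed

lemma local_lemma:
  fixes A :: "('a::topological_space, 'e::euclidean_space) chart set"
    and F :: "'a set \<Rightarrow> ('a, 'e) vfield set" and p :: 'a
  assumes sh: "vf_sheaf A F" and uc: "unique_continuation F" and man: "smooth_manifold A"
    and br: "bounded_rank F"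
  shows "\<exists>C. conn_open C \<and> p \<in> C \<and>
     (\<forall>q\<in>C. germ_dim F q = germ_dim F p \<longrightarrow> (\<forall>g\<in>germs F q. \<exists>K\<in>F C. g = germ q K))"
proof -
  obtain N where N: "\<forall>p. \<forall>n\<in>dimset F p. n \<le> N"
    using dim_bound[OF sh uc man br] by (elim exE) (rule that)
  have dp: "germ_dim F p \<in> dimset F p" using dim_facts(1)[OF N[THEN spec, of p]] .
  obtain B where B: "germ_dim F p = card B" "finite B" "germ_indep p B" "inj_on (germ p) B"
      "\<forall>K\<in>B. \<exists>U. conn_open U \<and> p \<in> U \<and> K \<in> F U"
    using dimsetE[OF dp] by (elim exE conjE) (rule that)
  obtain UK where UK: "\<forall>K\<in>B. conn_open (UK K) \<and> p \<in> UK K \<and> K \<in> F (UK K)"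
    using bchoice[OF B(5)] by (elim exE) (rule that)
  have UKo: "\<forall>K\<in>B. open (UK K) \<and> p \<in> UK K" using UK by (simp add: conn_open_def)
  obtain C where C: "conn_open C" "p \<in> C" "\<forall>K\<in>B. C \<subseteq> UK K"
    using common_nbhd[OF man B(2) UKo] by (elim exE conjE) (rule that)
  have UK2: "\<forall>K\<in>B. \<exists>U. conn_open U \<and> C \<subseteq> U \<and> K \<in> F U"
  proof
    fix K assume k: "K \<in> B"
    show "\<exists>U. conn_open U \<and> C \<subseteq> U \<and> K \<in> F U"
      by (rule exI[of _ "UK K"]) (use UK C(3) k in simp)
  qed
  let ?BC = "vf_restrict C ` B"
  have sub: "?BC \<subseteq> F C" using rc_F[OF sh C(1) UK2] by blast
  have injr: "inj_on (vf_restrict C) B" by (rule rc_inj[OF B(3) C(1) C(2)])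
  have cardBC: "card ?BC = card B" by (rule card_image[OF injr])
  have finBC: "finite ?BC" using B(2) by simp
  have oC: "open C" using C(1) by (simp add: conn_open_def)
  have main: "\<forall>g\<in>germs F q. \<exists>K\<in>F C. g = germ q K"
    if qC: "q \<in> C" and dq: "germ_dim F q = germ_dim F p" for q
  proof
    fix g assume g: "g \<in> germs F q"
    obtain L U where LU: "conn_open U" "q \<in> U" "L \<in> F U" "g = germ q L"
      using germs_E[OF g] by (elim exE conjE) (rule that)
    have indq: "germ_indep q ?BC"
    proof (rule germ_indepI)
      fix B'' c assume f: "finite B''" and s: "B'' \<subseteq> ?BC"
        and m: "(\<lambda>q d. \<Sum>K\<in>B''. c K *\<^sub>R K q d) \<in> germ q vf_zero"
      obtain W where W: "open W" "q \<in> W" "\<forall>x\<in>W. \<forall>d. (\<Sum>K\<in>B''. c K *\<^sub>R K x d) = 0"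
        using m unfolding germ_zero_iff by (elim exE conjE) (rule that)
      have o: "open (W \<inter> C)" using W(1) oC by (rule open_Int)
      have ne: "W \<inter> C \<noteq> {}" using W(2) qC by blast
      have van: "\<forall>x\<in>W \<inter> C. \<forall>d. (\<Sum>K\<in>B''. c K *\<^sub>R K x d) = 0" using W(3) by blast
      show "\<forall>K\<in>B''. c K = 0"
        by (rule rc_ind[OF sh uc B(2) B(3) C(1) C(2) UK2 s o ne _ van]) blast
    qed
    have BCin: "\<forall>K\<in>?BC. \<exists>U. conn_open U \<and> q \<in> U \<and> K \<in> F U"
    proof
      fix K assume "K \<in> ?BC"
      then have "K \<in> F C" using sub by blast
      then show "\<exists>U. conn_open U \<and> q \<in> U \<and> K \<in> F U" using C(1) qC by blast
    qed
    have cq: "card ?BC = germ_dim F q" using cardBC B(1) dq by simp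
    have dimle: "\<forall>n\<in>dimset F q. n \<le> germ_dim F q" using dim_facts(2)[OF N[THEN spec, of q]] .
    obtain c where c: "germ q L = germ q (\<lambda>x d. \<Sum>K\<in>?BC. c K *\<^sub>R K x d)"
      using span_lemma[OF dimle finBC indq BCin cq LU(1) LU(2) LU(3)] by (elim exE) (rule that)
    have "(\<lambda>x d. \<Sum>K\<in>?BC. c K *\<^sub>R K x d) \<in> F C" by (rule sheaf_sum[OF sh C(1) finBC sub])
    then show "\<exists>K\<in>F C. g = germ q K" using c LU(4) by blast
  qed
  show ?thesis using C(1) C(2) main by blast
qed



theorem proposition3p7:
  fixes A :: "('a::topological_space, 'e::euclidean_space) chart set"
    and \<F> :: "'a set \<Rightarrow> ('a, 'e) vfield set"
    and \<gamma> :: "real \<Rightarrow> 'a" and a b :: real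
  assumes "smooth_manifold A"
    and "vf_sheaf A \<F>"
    and "admissible \<F>"
    and "a \<le> b"
    and "continuous_on {a..b} \<gamma>"
    and "\<forall>t\<in>{a..b}. germ_dim \<F> (\<gamma> t) = germ_dim \<F> (\<gamma> a)"
  shows "\<forall>g0\<in>germs \<F> (\<gamma> a). \<exists>g. germ_transport \<F> \<gamma> a b g \<and> g a = g0 \<and>
           (\<forall>g'. germ_transport \<F> \<gamma> a b g' \<and> g' a = g0 \<longrightarrow> (\<forall>t\<in>{a..b}. g' t = g t))"
proof
  fix g0 assume g0: "g0 \<in> germs \<F> (\<gamma> a)"
  note man = assms(1) and sh = assms(2) and cont = assms(5) and dim = assms(6)
  have uc: "unique_continuation \<F>" and br: "bounded_rank \<F>"
    using assms(3) unfolding admissible_def by simp_all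
  have aab: "a \<in> {a..b}" using assms(4) by simp
  define P where "P = (\<lambda>t. \<exists>g. germ_transport \<F> \<gamma> a t g \<and> g a = g0)"
  have Pa: "P a"
  proof -
    obtain K0 U0 where K0: "conn_open U0" "\<gamma> a \<in> U0" "K0 \<in> \<F> U0" "g0 = germ (\<gamma> a) K0"
      using germs_E[OF g0] by (elim exE conjE) (rule that)
    have "\<forall>u\<in>{a..a}. \<gamma> u \<in> U0" using K0(2) by simp
    then have "germ_transport \<F> \<gamma> a a (\<lambda>u. germ (\<gamma> u) K0)" by (rule gt_const[where F=\<F> and K=K0 and C=U0, OF K0(1) K0(3)])
    then show ?thesis unfolding P_def using K0(4) by blast
  qed
  have loc: "\<forall>s\<in>{a..b}. \<exists>e>0. \<forall>t\<in>{a..b}. \<bar>t - s\<bar> < e \<longrightarrow> (P t \<longleftrightarrow> P s)"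
  proof
    fix s assume s: "s \<in> {a..b}"
    obtain C where C: "conn_open C" "\<gamma> s \<in> C"
      "\<forall>q\<in>C. germ_dim \<F> q = germ_dim \<F> (\<gamma> s) \<longrightarrow> (\<forall>g\<in>germs \<F> q. \<exists>K\<in>\<F> C. g = germ q K)"
      using local_lemma[OF sh uc man br, of "\<gamma> s"] by (elim exE conjE) (rule that)
    have oC: "open C" using C(1) by (simp add: conn_open_def)
    obtain \<delta> where d: "\<delta> > 0" "\<forall>t\<in>{a..b}. \<bar>t - s\<bar> < \<delta> \<longrightarrow> \<gamma> t \<in> C"
      using cont_win[OF cont s oC C(2)] by (elim exE conjE) (rule that)
    have step: "P y" if x: "x \<in> {a..b}" "\<bar>x - s\<bar> < \<delta>" and y: "y \<in> {a..b}" "\<bar>y - s\<bar> < \<delta>"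
      and Px: "P x" for x y
    proof -
      obtain h where h: "germ_transport \<F> \<gamma> a x h" "h a = g0" using Px unfolding P_def by blast
      show "P y"
      proof (cases "y \<le> x")
        case True
        have "germ_transport \<F> \<gamma> a y h" by (rule gt_restrict[OF h(1) order_refl True])
        then show ?thesis unfolding P_def using h(2) by blast
      next
        case False
        have ax: "a \<le> x" using x by simp
        have hx: "h x \<in> germs \<F> (\<gamma> x)" by (rule gt_mem[OF h(1)]) (use ax in simp)
        have gxC: "\<gamma> x \<in> C" using d(2) x by blast
        have dx: "germ_dim \<F> (\<gamma> x) = germ_dim \<F> (\<gamma> a)" using bspec[OF dim x(1)] .
        have ds: "germ_dim \<F> (\<gamma> s) = germ_dim \<F> (\<gamma> a)" using bspec[OF dim s] .
        have "germ_dim \<F> (\<gamma> x) = germ_dim \<F> (\<gamma> s)" using dx ds by (rule trans[OF _ sym])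
        then have "\<exists>K\<in>\<F> C. h x = germ (\<gamma> x) K" using C(3)[rule_format, OF gxC _ hx] by blast
        then obtain K where K: "K \<in> \<F> C" "h x = germ (\<gamma> x) K" by (elim bexE) (rule that)
        have inC: "\<forall>u\<in>{x..y}. \<gamma> u \<in> C"
        proof
          fix u assume u: "u \<in> {x..y}"
          then have "u \<in> {a..b}" "\<bar>u - s\<bar> < \<delta>" using x y by auto
          then show "\<gamma> u \<in> C" using d(2) by blast
        qed
        have gc: "germ_transport \<F> \<gamma> x y (\<lambda>u. germ (\<gamma> u) K)" by (rule gt_const[where F=\<F> and K=K and C=C, OF C(1) K(1) inC])
        have conty: "continuous_on {a..y} \<gamma>" by (rule continuous_on_subset[OF cont]) (use y in auto)
        have xy: "x \<le> y" using False by simp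
        have "germ_transport \<F> \<gamma> a y (\<lambda>t. if t \<le> x then h t else germ (\<gamma> t) K)"
          by (rule gt_glue[OF sh uc man conty ax xy h(1) gc]) (use K(2) in simp)
        moreover have "(\<lambda>t. if t \<le> x then h t else germ (\<gamma> t) K) a = g0" using ax h(2) by simp
        ultimately show ?thesis unfolding P_def by blast
      qed
    qed
    have "\<forall>t\<in>{a..b}. \<bar>t - s\<bar> < \<delta> \<longrightarrow> (P t \<longleftrightarrow> P s)"
    proof (intro ballI impI)
      fix t assume t: "t \<in> {a..b}" "\<bar>t - s\<bar> < \<delta>"
      have ss: "\<bar>s - s\<bar> < \<delta>" using d(1) by simp
      show "P t \<longleftrightarrow> P s"
      proof
        assume "P t" then show "P s" by (rule step[OF t s ss])
      next
        assume "P s" then show "P t" by (rule step[OF s ss t])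
      qed
    qed
    then show "\<exists>e>0. \<forall>t\<in>{a..b}. \<bar>t - s\<bar> < e \<longrightarrow> (P t \<longleftrightarrow> P s)" using d(1) by blast
  qed
  have bb: "b \<in> {a..b}" using assms(4) by simp
  have "P b" using loc_const2[OF loc bb aab] Pa by blast
  then obtain g where g: "germ_transport \<F> \<gamma> a b g" "g a = g0" unfolding P_def by blast
  have "\<forall>g'. germ_transport \<F> \<gamma> a b g' \<and> g' a = g0 \<longrightarrow> (\<forall>t\<in>{a..b}. g' t = g t)"
  proof (intro allI impI)
    fix g' assume g': "germ_transport \<F> \<gamma> a b g' \<and> g' a = g0"
    have "g' a = g a" using g' g(2) by simp
    then show "\<forall>t\<in>{a..b}. g' t = g t" by (rule gt_unique[OF sh uc man cont conjunct1[OF g'] g(1) aab])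
  qed
  then show "\<exists>g. germ_transport \<F> \<gamma> a b g \<and> g a = g0 \<and>
           (\<forall>g'. germ_transport \<F> \<gamma> a b g' \<and> g' a = g0 \<longrightarrow> (\<forall>t\<in>{a..b}. g' t = g t))"
    using g by blast
qed

end
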